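(* Let $\Lambda$ be a normal two-sorted term-modal logic and let $\Gamma$ be a $\Lambda$-consistent set of formulas of $\mathcal L$. Then there exists a $\Lambda$-consistent set $\Gamma_+$ of formulas of $\mathcal L^+$ with the $\forall$-property such that $\Gamma\subseteq\Gamma_+$.
   Context: Fix a finite nonempty set of agents $\mathcal A$ with $n=|\mathcal A|$ and two sorts $agt$, $obj$. The language $\mathcal L$ has countably infinite sets $VAR_{agt}$, $VAR_{obj}$ of variables, countable (possibly empty) sets of sorted constants, sorted function symbols (arity $\alpha\in\{agt,obj\}^{k+1}$) and sorted relation symbols (arity $\beta\in\{agt,obj\}^k$, $k\ge1$), $=$, $\neg,\to,\forall$, and operators $K_t$ for agent-sorted terms $t$; formulas: $t_1=t_2$, sort-correct $P(t_1,\dots,t_k)$, $\neg\varphi$, $\varphi\to\psi$, $\forall x\varphi$, $K_t\varphi$. Free variables as usual, those of $K_t\varphi$ being those of $t$ and $\varphi$; $\varphi(y/x)$ is substitution of $y$ for free occurrences of $x$. $\mathcal L^+$ is the language obtained from $\mathcal L$ by adding countably infinitely many new variables of each sort. A normal two-sorted term-modal logic $\Lambda$ (over $\mathcal L^+$) is a set of formulas containing: all substitution instances of valid formulas of propositional modal logic; ($\forall$) $\forall x\varphi\to\varphi(y/x)$ for $y$ a variable free in $\varphi$; (Id) $t=t$; (MSD) $x\neq y$ for $x$ agent-sorted, $y$ object-sorted variables; (PS) $(x=y)\to(\varphi(x)\to\varphi(y))$; ($\exists$Id) $(c=c)\to\exists x(x=c)$ for constants $c$; (N) $\exists x_1\cdots\exists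 x_n(x_1\neq x_2\wedge\dots\wedge x_{n-1}\neq x_n\wedge\forall y(y=x_1\vee\dots\vee y=x_n))$ for agent variables; (K) $K_t(\varphi\to\psi)\to(K_t\varphi\to K_t\psi)$; (BF) $\forall xK_t\varphi\to K_t\forall x\varphi$, $x\neq t$; (KNI) $(x\neq y)\to K_t(x\neq y)$; and closed under modus ponens, (KG) from $\varphi$ infer $K_t\varphi$, and (Gen) from $\varphi\to\psi$ infer $\varphi\to\forall x\psi$ when $x$ is not free in $\varphi$. $\Gamma\vdash_\Lambda\varphi$ iff $\bigwedge\Gamma_0\to\varphi\in\Lambda$ for some finite $\Gamma_0\subseteq\Gamma$; $\Gamma$ is $\Lambda$-consistent iff $\Gamma\not\vdash_\Lambda\varphi\wedge\neg\varphi$ for every formula $\varphi$. A set $\Gamma$ has the $\forall$-property if for every formula $\varphi$ and every variable $x$ there is a variable $y$ with $(\varphi(y/x)\to\forall x\varphi)\in\Gamma$. *)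

theory Defs
  imports Main "HOL-Library.Countable"
begin

section \<open>Syntax of two-sorted term-modal logic\<close>

datatype sort = Agt | Obj

text \<open>The variables of the base language L
  are those with even index; L+ has all variables (the odd-indexed ones are the
  countably infinitely many new variables of each sort).\<close>
datatype var = Var sort nat

fun vsort :: "var \<Rightarrow> sort" where
  "vsort (Var s _) = s"

definition Lvar :: "var \<Rightarrow> bool" where
  "Lvar v \<longleftrightarrow> (\<exists>s k. v = Var s (2 * k))"

datatype ('c, 'f) trm = TV var | TC 'c | TF 'f "('c, 'f) trm list"

datatype ('c, 'f, 'r) fm =
    Eq "('c, 'f) trm" "('c, 'f) trm"
  | Pred 'r "('c, 'f) trm list"
  | Neg "('c, 'f, 'r) fm"
  | Imp "('c, 'f, 'r) fm" "('c, 'f, 'r) fm"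
  | All var "('c, 'f, 'r) fm"
  | K "('c, 'f) trm" "('c, 'f, 'r) fm"

text \<open>Signature: cs c = Some s iff c is a constant of sort s; fs f = Some (args, res);
  rs r = Some args.  None means the symbol is not part of the language, so each set of
  symbols may be empty.\<close>

fun wt :: "('c \<Rightarrow> sort option) \<Rightarrow> ('f \<Rightarrow> (sort list \<times> sort) option)
           \<Rightarrow> ('c, 'f) trm \<Rightarrow> sort \<Rightarrow> bool"
and wts :: "('c \<Rightarrow> sort option) \<Rightarrow> ('f \<Rightarrow> (sort list \<times> sort) option)
           \<Rightarrow> ('c, 'f) trm list \<Rightarrow> sort list \<Rightarrow> bool" where
  "wt cs fs (TV v) s = (vsort v = s)"
| "wt cs fs (TC c) s = (cs c = Some s)"
| "wt cs fs (TF f ts) s =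
     (case fs f of None \<Rightarrow> False | Some (as, r) \<Rightarrow> r = s \<and> wts cs fs ts as)"
| "wts cs fs [] ss = (ss = [])"
| "wts cs fs (t # ts) ss =
     (case ss of [] \<Rightarrow> False | s # ss' \<Rightarrow> wt cs fs t s \<and> wts cs fs ts ss')"

fun fvt :: "('c, 'f) trm \<Rightarrow> var set" where
  "fvt (TV v) = {v}"
| "fvt (TC c) = {}"
| "fvt (TF f ts) = (\<Union>t\<in>set ts. fvt t)"

fun substt :: "var \<Rightarrow> var \<Rightarrow> ('c, 'f) trm \<Rightarrow> ('c, 'f) trm" where
  "substt y x (TV v) = TV (if v = x then y else v)"
| "substt y x (TC c) = TC c"
| "substt y x (TF f ts) = TF f (map (substt y x) ts)"

fun wf :: "('c \<Rightarrow> sort option) \<Rightarrow> ('f \<Rightarrow> (sort list \<times> sort) option)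
           \<Rightarrow> ('r \<Rightarrow> sort list option) \<Rightarrow> ('c, 'f, 'r) fm \<Rightarrow> bool" where
  "wf cs fs rs (Eq a b) = ((\<exists>s. wt cs fs a s) \<and> (\<exists>s. wt cs fs b s))"
| "wf cs fs rs (Pred r ts) = (case rs r of None \<Rightarrow> False | Some as \<Rightarrow> wts cs fs ts as)"
| "wf cs fs rs (Neg \<phi>) = wf cs fs rs \<phi>"
| "wf cs fs rs (Imp \<phi> \<psi>) = (wf cs fs rs \<phi> \<and> wf cs fs rs \<psi>)"
| "wf cs fs rs (All x \<phi>) = wf cs fs rs \<phi>"
| "wf cs fs rs (K t \<phi>) = (wt cs fs t Agt \<and> wf cs fs rs \<phi>)"

fun fv :: "('c, 'f, 'r) fm \<Rightarrow> var set" where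
  "fv (Eq a b) = fvt a \<union> fvt b"
| "fv (Pred r ts) = (\<Union>t\<in>set ts. fvt t)"
| "fv (Neg \<phi>) = fv \<phi>"
| "fv (Imp \<phi> \<psi>) = fv \<phi> \<union> fv \<psi>"
| "fv (All x \<phi>) = fv \<phi> - {x}"
| "fv (K t \<phi>) = fvt t \<union> fv \<phi>"

fun vars :: "('c, 'f, 'r) fm \<Rightarrow> var set" where
  "vars (Eq a b) = fvt a \<union> fvt b"
| "vars (Pred r ts) = (\<Union>t\<in>set ts. fvt t)"
| "vars (Neg \<phi>) = vars \<phi>"
| "vars (Imp \<phi> \<psi>) = vars \<phi> \<union> vars \<psi>"
| "vars (All x \<phi>) = insert x (vars \<phi>)"
| "vars (K t \<phi>) = fvt t \<union> vars \<phi>"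

fun subst :: "var \<Rightarrow> var \<Rightarrow> ('c, 'f, 'r) fm \<Rightarrow> ('c, 'f, 'r) fm" where
  "subst y x (Eq a b) = Eq (substt y x a) (substt y x b)"
| "subst y x (Pred r ts) = Pred r (map (substt y x) ts)"
| "subst y x (Neg \<phi>) = Neg (subst y x \<phi>)"
| "subst y x (Imp \<phi> \<psi>) = Imp (subst y x \<phi>) (subst y x \<psi>)"
| "subst y x (All z \<phi>) = (if z = x then All z \<phi> else All z (subst y x \<phi>))"
| "subst y x (K t \<phi>) = K (substt y x t) (subst y x \<phi>)"

fun free_for :: "var \<Rightarrow> var \<Rightarrow> ('c, 'f, 'r) fm \<Rightarrow> bool" where
  "free_for y x (Eq a b) = True"
| "free_for y x (Pred r ts) = True"
| "free_for y x (Neg \<phi>) = free_for y x \<phi>"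
| "free_for y x (Imp \<phi> \<psi>) = (free_for y x \<phi> \<and> free_for y x \<psi>)"
| "free_for y x (All z \<phi>) = (x \<notin> fv (All z \<phi>) \<or> (z \<noteq> y \<and> free_for y x \<phi>))"
| "free_for y x (K t \<phi>) = free_for y x \<phi>"

definition And :: "('c, 'f, 'r) fm \<Rightarrow> ('c, 'f, 'r) fm \<Rightarrow> ('c, 'f, 'r) fm" where
  "And \<phi> \<psi> = Neg (Imp \<phi> (Neg \<psi>))"

definition Or :: "('c, 'f, 'r) fm \<Rightarrow> ('c, 'f, 'r) fm \<Rightarrow> ('c, 'f, 'r) fm" where
  "Or \<phi> \<psi> = Imp (Neg \<phi>) \<psi>"

definition Ex :: "var \<Rightarrow> ('c, 'f, 'r) fm \<Rightarrow> ('c, 'f, 'r) fm" where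
  "Ex x \<phi> = Neg (All x (Neg \<phi>))"

fun Conj :: "('c, 'f, 'r) fm \<Rightarrow> ('c, 'f, 'r) fm list \<Rightarrow> ('c, 'f, 'r) fm" where
  "Conj \<phi> [] = \<phi>"
| "Conj \<phi> (\<psi> # \<psi>s) = And \<phi> (Conj \<psi> \<psi>s)"

fun Disj :: "('c, 'f, 'r) fm \<Rightarrow> ('c, 'f, 'r) fm list \<Rightarrow> ('c, 'f, 'r) fm" where
  "Disj \<phi> [] = \<phi>"
| "Disj \<phi> (\<psi> # \<psi>s) = Or \<phi> (Disj \<psi> \<psi>s)"

definition Exs :: "var list \<Rightarrow> ('c, 'f, 'r) fm \<Rightarrow> ('c, 'f, 'r) fm" where
  "Exs xs \<phi> = foldr Ex xs \<phi>"

definition NForm :: "var list \<Rightarrow> var \<Rightarrow> ('c, 'f, 'r) fm" where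
  "NForm xs y =
     (let ds = [Neg (Eq (TV (xs ! i)) (TV (xs ! j))). i \<leftarrow> [0..<length xs], j \<leftarrow> [Suc i..<length xs]];
          eqs = map (\<lambda>x. Eq (TV y) (TV x)) xs;
          cov = All y (Disj (hd eqs) (tl eqs));
          cl = ds @ [cov]
      in Exs xs (Conj (hd cl) (tl cl)))"

section \<open>Propositional modal logic (mono-modal K) and substitution instances\<close>

datatype pm = PA nat | PN pm | PI pm pm | PB pm

fun psem :: "(nat \<Rightarrow> nat \<Rightarrow> bool) \<Rightarrow> (nat \<Rightarrow> nat \<Rightarrow> bool) \<Rightarrow> nat \<Rightarrow> pm \<Rightarrow> bool" where
  "psem R V w (PA i) = V i w"
| "psem R V w (PN p) = (\<not> psem R V w p)"
| "psem R V w (PI p q) = (psem R V w p \<longrightarrow> psem R V w q)"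
| "psem R V w (PB p) = (\<forall>v. R w v \<longrightarrow> psem R V v p)"

definition pvalid :: "pm \<Rightarrow> bool" where
  "pvalid p \<longleftrightarrow> (\<forall>R V w. psem R V w p)"

fun inst :: "(nat \<Rightarrow> ('c, 'f, 'r) fm) \<Rightarrow> ('c, 'f) trm \<Rightarrow> pm \<Rightarrow> ('c, 'f, 'r) fm" where
  "inst \<sigma> t (PA i) = \<sigma> i"
| "inst \<sigma> t (PN p) = Neg (inst \<sigma> t p)"
| "inst \<sigma> t (PI p q) = Imp (inst \<sigma> t p) (inst \<sigma> t q)"
| "inst \<sigma> t (PB p) = K t (inst \<sigma> t p)"

section \<open>Normal two-sorted term-modal logics (over L+)\<close>

definition normal_logic ::
  "nat \<Rightarrow> ('c \<Rightarrow> sort option) \<Rightarrow> ('f \<Rightarrow> (sort list \<times> sort) option)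
   \<Rightarrow> ('r \<Rightarrow> sort list option) \<Rightarrow> ('c, 'f, 'r) fm set \<Rightarrow> bool" where
  "normal_logic n cs fs rs \<Lambda> \<longleftrightarrow>
     (\<forall>\<phi>\<in>\<Lambda>. wf cs fs rs \<phi>)
   \<and> (\<forall>p \<sigma> t. pvalid p \<and> (\<forall>i. wf cs fs rs (\<sigma> i)) \<and> wt cs fs t Agt \<longrightarrow> inst \<sigma> t p \<in> \<Lambda>)
   \<and> (\<forall>x y \<phi>. wf cs fs rs \<phi> \<and> vsort y = vsort x \<and> free_for y x \<phi>
        \<longrightarrow> Imp (All x \<phi>) (subst y x \<phi>) \<in> \<Lambda>)
   \<and> (\<forall>t s. wt cs fs t s \<longrightarrow> Eq t t \<in> \<Lambda>)
   \<and> (\<forall>x y. vsort x = Agt \<and> vsort y = Obj \<longrightarrow> Neg (Eq (TV x) (TV y)) \<in> \<Lambda>)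
   \<and> (\<forall>x y \<phi>. wf cs fs rs \<phi> \<and> vsort y = vsort x \<and> free_for y x \<phi>
        \<longrightarrow> Imp (Eq (TV x) (TV y)) (Imp \<phi> (subst y x \<phi>)) \<in> \<Lambda>)
   \<and> (\<forall>c s x. cs c = Some s \<and> vsort x = s
        \<longrightarrow> Imp (Eq (TC c) (TC c)) (Ex x (Eq (TV x) (TC c))) \<in> \<Lambda>)
   \<and> (\<forall>xs y. length xs = n \<and> distinct xs \<and> (\<forall>v\<in>set xs. vsort v = Agt)
        \<and> vsort y = Agt \<and> y \<notin> set xs \<longrightarrow> NForm xs y \<in> \<Lambda>)
   \<and> (\<forall>t \<phi> \<psi>. wt cs fs t Agt \<and> wf cs fs rs \<phi> \<and> wf cs fs rs \<psi>
        \<longrightarrow> Imp (K t (Imp \<phi> \<psi>)) (Imp (K t \<phi>) (K t \<psi>)) \<in> \<Lambda>)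
   \<and> (\<forall>x t \<phi>. wt cs fs t Agt \<and> wf cs fs rs \<phi> \<and> x \<notin> fvt t
        \<longrightarrow> Imp (All x (K t \<phi>)) (K t (All x \<phi>)) \<in> \<Lambda>)
   \<and> (\<forall>x y t. wt cs fs t Agt
        \<longrightarrow> Imp (Neg (Eq (TV x) (TV y))) (K t (Neg (Eq (TV x) (TV y)))) \<in> \<Lambda>)
   \<and> (\<forall>\<phi> \<psi>. Imp \<phi> \<psi> \<in> \<Lambda> \<and> \<phi> \<in> \<Lambda> \<longrightarrow> \<psi> \<in> \<Lambda>)
   \<and> (\<forall>\<phi> t. \<phi> \<in> \<Lambda> \<and> wt cs fs t Agt \<longrightarrow> K t \<phi> \<in> \<Lambda>)
   \<and> (\<forall>\<phi> \<psi> x. Imp \<phi> \<psi> \<in> \<Lambda> \<and> x \<notin> fv \<phi> \<longrightarrow> Imp \<phi> (All x \<psi>) \<in> \<Lambda>)"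

definition derives :: "('c, 'f, 'r) fm set \<Rightarrow> ('c, 'f, 'r) fm set \<Rightarrow> ('c, 'f, 'r) fm \<Rightarrow> bool" where
  "derives \<Lambda> \<Gamma> \<phi> \<longleftrightarrow>
     \<phi> \<in> \<Lambda> \<or> (\<exists>\<psi> \<psi>s. set (\<psi> # \<psi>s) \<subseteq> \<Gamma> \<and> Imp (Conj \<psi> \<psi>s) \<phi> \<in> \<Lambda>)"

definition consistent ::
  "('c \<Rightarrow> sort option) \<Rightarrow> ('f \<Rightarrow> (sort list \<times> sort) option) \<Rightarrow> ('r \<Rightarrow> sort list option)
   \<Rightarrow> ('c, 'f, 'r) fm set \<Rightarrow> ('c, 'f, 'r) fm set \<Rightarrow> bool" where
  "consistent cs fs rs \<Lambda> \<Gamma> \<longleftrightarrow>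
     (\<forall>\<phi>. wf cs fs rs \<phi> \<longrightarrow> \<not> derives \<Lambda> \<Gamma> (And \<phi> (Neg \<phi>)))"

definition forall_property ::
  "('c \<Rightarrow> sort option) \<Rightarrow> ('f \<Rightarrow> (sort list \<times> sort) option) \<Rightarrow> ('r \<Rightarrow> sort list option)
   \<Rightarrow> ('c, 'f, 'r) fm set \<Rightarrow> bool" where
  "forall_property cs fs rs \<Gamma> \<longleftrightarrow>
     (\<forall>\<phi> x. wf cs fs rs \<phi> \<longrightarrow>
        (\<exists>y. vsort y = vsort x \<and> Imp (subst y x \<phi>) (All x \<phi>) \<in> \<Gamma>))"

definition Lfm ::
  "('c \<Rightarrow> sort option) \<Rightarrow> ('f \<Rightarrow> (sort list \<times> sort) option) \<Rightarrow> ('r \<Rightarrow> sort list option)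
   \<Rightarrow> ('c, 'f, 'r) fm \<Rightarrow> bool" where
  "Lfm cs fs rs \<phi> \<longleftrightarrow> wf cs fs rs \<phi> \<and> (\<forall>v\<in>vars \<phi>. Lvar v)"

end

theory Submission
  imports Defs "HOL-Library.Countable"
begin

instance sort :: countable by countable_datatype
instance var :: countable by countable_datatype
instance trm :: (countable, countable) countable by countable_datatype
instance fm :: (countable, countable, countable) countable by countable_datatype

lemma wt_substt:
  assumes "vsort y = vsort x"
  shows "wt cs fs (substt y x t) s = wt cs fs t s"
proof (induction t arbitrary: s)
  case (TV v) then show ?case using assms by simp
next
  case (TC c) then show ?case by simp
next
  case (TF f ts)
  have "\<forall>ss. wts cs fs (map (substt y x) ts) ss = wts cs fs ts ss"
    using TF.IH
  proof (induction ts)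
    case Nil then show ?case by simp
  next
    case (Cons a ts) then show ?case by (auto split: list.splits)
  qed
  then show ?case by (simp split: option.splits)
qed

lemma wts_substt:
  assumes "vsort y = vsort x"
  shows "wts cs fs (map (substt y x) ts) ss = wts cs fs ts ss"
proof (induction ts arbitrary: ss)
  case Nil then show ?case by simp
next
  case (Cons a ts) then show ?case by (simp add: wt_substt[OF assms] split: list.splits)
qed

lemma wf_subst:
  assumes "vsort y = vsort x"
  shows "wf cs fs rs (subst y x \<phi>) = wf cs fs rs \<phi>"
  by (induction \<phi>) (auto simp: wt_substt[OF assms] wts_substt[OF assms] split: option.splits)

lemma substt_back: "y \<notin> fvt t \<Longrightarrow> substt x y (substt y x t) = t"
  by (induction t) (auto simp: map_idI)

lemma substt_id: "y \<notin> fvt t \<Longrightarrow> substt x y t = t"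
  by (induction t) (auto simp: map_idI)

lemma subst_id: "y \<notin> vars \<phi> \<Longrightarrow> subst x y \<phi> = \<phi>"
  by (induction \<phi>) (auto simp: substt_id map_idI)

lemma subst_back: "y \<notin> vars \<phi> \<Longrightarrow> y \<noteq> x \<Longrightarrow> subst x y (subst y x \<phi>) = \<phi>"
  by (induction \<phi>) (auto simp: substt_back map_idI subst_id)

lemma fv_vars: "fv \<phi> \<subseteq> vars \<phi>"
  by (induction \<phi>) auto

lemma fvt_substt: "y \<noteq> x \<Longrightarrow> x \<notin> fvt (substt y x t)"
  by (induction t) auto

lemma fv_subst: "y \<noteq> x \<Longrightarrow> x \<notin> fv (subst y x \<phi>)"
  by (induction \<phi>) (auto simp: fvt_substt)

lemma free_for_back: "y \<notin> vars \<phi> \<Longrightarrow> y \<noteq> x \<Longrightarrow> free_for x y (subst y x \<phi>)"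
proof (induction \<phi>)
  case (All z \<psi>)
  show ?case
  proof (cases "z = x")
    case True
    then show ?thesis using All.prems fv_vars[of \<psi>] by auto
  next
    case False
    then show ?thesis using All by auto
  qed
qed auto

lemma fvt_finite: "finite (fvt t)"
  by (induction t) auto

lemma vars_finite: "finite (vars \<phi>)"
  by (induction \<phi>) (auto simp: fvt_finite)

lemma fvt_substt_sub: "fvt (substt y x t) \<subseteq> insert y (fvt t)"
  by (induction t) auto

lemma vars_subst: "vars (subst y x \<phi>) \<subseteq> insert y (vars \<phi>)"
proof (induction \<phi>)
  case (Eq a b) then show ?case using fvt_substt_sub[of y x a] fvt_substt_sub[of y x b] by auto
next
  case (Pred r ts) then show ?case using fvt_substt_sub[of y x] by fastforce
next
  case (K t \<psi>) then show ?case using fvt_substt_sub[of y x t] by auto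
qed auto

lemma wf_And[simp]: "wf cs fs rs (And a b) = (wf cs fs rs a \<and> wf cs fs rs b)"
  by (simp add: And_def)

lemma wf_Conj: "wf cs fs rs (Conj a as) = (wf cs fs rs a \<and> (\<forall>b\<in>set as. wf cs fs rs b))"
  by (induction as arbitrary: a) auto

lemma fv_Conj: "fv (Conj a as) = fv a \<union> (\<Union>b\<in>set as. fv b)"
  by (induction as arbitrary: a) (auto simp: And_def)

locale NL =
  fixes n cs fs rs and \<Lambda> :: "('c::countable, 'f::countable, 'r::countable) fm set"
  assumes nl: "normal_logic n cs fs rs \<Lambda>"
begin

abbreviation W where "W \<equiv> wf cs fs rs"

definition T0 :: "('c, 'f) trm" where "T0 = TV (Var Agt 0)"

lemma T0_wt: "wt cs fs T0 Agt" by (simp add: T0_def)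

lemmas nlu = nl[unfolded normal_logic_def]
lemmas ax_taut = nlu[THEN conjunct2, THEN conjunct1]
lemmas ax_all = nlu[THEN conjunct2, THEN conjunct2, THEN conjunct1]
lemmas ax_id = nlu[THEN conjunct2, THEN conjunct2, THEN conjunct2, THEN conjunct1]
lemmas ax_mp = nlu[THEN conjunct2, THEN conjunct2, THEN conjunct2, THEN conjunct2, THEN conjunct2,
  THEN conjunct2, THEN conjunct2, THEN conjunct2, THEN conjunct2, THEN conjunct2, THEN conjunct2, THEN conjunct1]
lemmas ax_gen = nlu[THEN conjunct2, THEN conjunct2, THEN conjunct2, THEN conjunct2, THEN conjunct2,
  THEN conjunct2, THEN conjunct2, THEN conjunct2, THEN conjunct2, THEN conjunct2, THEN conjunct2, THEN conjunct2, THEN conjunct2]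

lemma taut: "pvalid p \<Longrightarrow> (\<And>i. W (\<sigma> i)) \<Longrightarrow> inst \<sigma> T0 p \<in> \<Lambda>"
  using ax_taut T0_wt by blast

lemma mp: "Imp a b \<in> \<Lambda> \<Longrightarrow> a \<in> \<Lambda> \<Longrightarrow> b \<in> \<Lambda>"
  using ax_mp by blast

lemma gen: "Imp a b \<in> \<Lambda> \<Longrightarrow> x \<notin> fv a \<Longrightarrow> Imp a (All x b) \<in> \<Lambda>"
  using ax_gen by blast

lemma allax: "W \<phi> \<Longrightarrow> vsort y = vsort x \<Longrightarrow> free_for y x \<phi> \<Longrightarrow> Imp (All x \<phi>) (subst y x \<phi>) \<in> \<Lambda>"
  using ax_all by blast

lemma idax: "wt cs fs t s \<Longrightarrow> Eq t t \<in> \<Lambda>"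
  using ax_id by blast

definition sg :: "('c, 'f, 'r) fm list \<Rightarrow> nat \<Rightarrow> ('c, 'f, 'r) fm" where
  "sg xs i = (if i < length xs then xs ! i else hd xs)"

lemma sg_wf: "xs \<noteq> [] \<Longrightarrow> \<forall>a\<in>set xs. W a \<Longrightarrow> W (sg xs i)"
  unfolding sg_def by auto

lemmas tautI = taut[of _ "sg _", OF _ sg_wf]

lemma T_K: assumes "W a" "W b" "b \<in> \<Lambda>" shows "Imp a b \<in> \<Lambda>"
proof -
  have "inst (sg [a,b]) T0 (PI (PA 1) (PI (PA 0) (PA 1))) \<in> \<Lambda>"
    by (rule tautI) (auto simp: pvalid_def assms)
  then show ?thesis using assms mp by (simp add: sg_def)
qed

lemma T_id: assumes "W a" shows "Imp a a \<in> \<Lambda>"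
proof -
  have "inst (sg [a]) T0 (PI (PA 0) (PA 0)) \<in> \<Lambda>"
    by (rule tautI) (auto simp: pvalid_def assms)
  then show ?thesis by (simp add: sg_def)
qed

lemma T_andL: assumes "W a" "W b" shows "Imp (And a b) a \<in> \<Lambda>"
proof -
  have "inst (sg [a,b]) T0 (PI (PN (PI (PA 0) (PN (PA 1)))) (PA 0)) \<in> \<Lambda>"
    by (rule tautI) (auto simp: pvalid_def assms)
  then show ?thesis by (simp add: sg_def And_def)
qed

lemma T_andR: assumes "W a" "W b" "W c" "Imp b c \<in> \<Lambda>" shows "Imp (And a b) c \<in> \<Lambda>"
proof -
  have "inst (sg [a,b,c]) T0 (PI (PI (PA 1) (PA 2)) (PI (PN (PI (PA 0) (PN (PA 1)))) (PA 2))) \<in> \<Lambda>"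
    by (rule tautI) (auto simp: pvalid_def assms)
  then show ?thesis using assms mp by (simp add: sg_def And_def)
qed

lemma T_pair: assumes "W d" "W a" "W b" "Imp d a \<in> \<Lambda>" "Imp d b \<in> \<Lambda>"
  shows "Imp d (And a b) \<in> \<Lambda>"
proof -
  have "inst (sg [d,a,b]) T0 (PI (PI (PA 0) (PA 1)) (PI (PI (PA 0) (PA 2))
          (PI (PA 0) (PN (PI (PA 1) (PN (PA 2))))))) \<in> \<Lambda>"
    by (rule tautI) (auto simp: pvalid_def assms)
  then show ?thesis using assms mp by (simp add: sg_def And_def) (meson mp)
qed

lemma T_trans: assumes "W a" "W b" "W c" "Imp a b \<in> \<Lambda>" "Imp b c \<in> \<Lambda>"
  shows "Imp a c \<in> \<Lambda>"
proof -
  have "inst (sg [a,b,c]) T0 (PI (PI (PA 0) (PA 1)) (PI (PI (PA 1) (PA 2)) (PI (PA 0) (PA 2)))) \<in> \<Lambda>"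
    by (rule tautI) (auto simp: pvalid_def assms)
  then show ?thesis using assms by (simp add: sg_def) (meson mp)
qed

lemma T_exp: assumes "W h" "W c" "W e" "Imp (And h c) e \<in> \<Lambda>"
  shows "Imp c (Imp h e) \<in> \<Lambda>"
proof -
  have "inst (sg [h,c,e]) T0 (PI (PI (PN (PI (PA 0) (PN (PA 1)))) (PA 2)) (PI (PA 1) (PI (PA 0) (PA 2)))) \<in> \<Lambda>"
    by (rule tautI) (auto simp: pvalid_def assms)
  then show ?thesis using assms mp by (simp add: sg_def And_def)
qed

lemma T1: assumes "W c" "W a" "W b" "W x"
  "Imp c (Imp (Imp a b) (And x (Neg x))) \<in> \<Lambda>" shows "Imp c a \<in> \<Lambda>"
proof -
  have "inst (sg [c,a,b,x]) T0 (PI (PI (PA 0) (PI (PI (PA 1) (PA 2)) (PN (PI (PA 3) (PN (PN (PA 3)))))))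
           (PI (PA 0) (PA 1))) \<in> \<Lambda>"
    by (rule tautI) (auto simp: pvalid_def assms)
  then show ?thesis using assms mp by (simp add: sg_def And_def)
qed

lemma T2: assumes "W c" "W a" "W b" "W x"
  "Imp c (Imp (Imp a b) (And x (Neg x))) \<in> \<Lambda>" shows "Imp c (Neg b) \<in> \<Lambda>"
proof -
  have "inst (sg [c,a,b,x]) T0 (PI (PI (PA 0) (PI (PI (PA 1) (PA 2)) (PN (PI (PA 3) (PN (PN (PA 3)))))))
           (PI (PA 0) (PN (PA 2)))) \<in> \<Lambda>"
    by (rule tautI) (auto simp: pvalid_def assms)
  then show ?thesis using assms mp by (simp add: sg_def And_def)
qed

lemma T3: assumes "W c" "W b" "W x" "Imp c b \<in> \<Lambda>" "Imp c (Neg b) \<in> \<Lambda>"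
  shows "Imp c (And x (Neg x)) \<in> \<Lambda>"
proof -
  have "inst (sg [c,b,x]) T0 (PI (PI (PA 0) (PA 1)) (PI (PI (PA 0) (PN (PA 1)))
           (PI (PA 0) (PN (PI (PA 2) (PN (PN (PA 2)))))))) \<in> \<Lambda>"
    by (rule tautI) (auto simp: pvalid_def assms)
  then show ?thesis using assms by (simp add: sg_def And_def) (meson mp)
qed

lemma T4: assumes "W t" "W d" "W e" "t \<in> \<Lambda>" "Imp (And t d) e \<in> \<Lambda>" shows "Imp d e \<in> \<Lambda>"
proof -
  have "inst (sg [t,d,e]) T0 (PI (PA 0) (PI (PI (PN (PI (PA 0) (PN (PA 1)))) (PA 2)) (PI (PA 1) (PA 2)))) \<in> \<Lambda>"
    by (rule tautI) (auto simp: pvalid_def assms)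
  then show ?thesis using assms by (simp add: sg_def And_def) (meson mp)
qed

lemma conj_mem: "\<psi> \<in> set (a # as) \<Longrightarrow> W a \<Longrightarrow> \<forall>b\<in>set as. W b \<Longrightarrow> Imp (Conj a as) \<psi> \<in> \<Lambda>"
proof (induction as arbitrary: a)
  case Nil then show ?case by (simp add: T_id)
next
  case (Cons b bs)
  show ?case
  proof (cases "\<psi> = a")
    case True
    then show ?thesis using Cons.prems by (simp add: T_andL wf_Conj)
  next
    case False
    then have "Imp (Conj b bs) \<psi> \<in> \<Lambda>" using Cons by auto
    moreover have "W \<psi>" using Cons.prems by auto
    ultimately show ?thesis using Cons.prems by (simp add: T_andR wf_Conj)
  qed
qed

lemma conj_intro: "W d \<Longrightarrow> \<forall>b\<in>set (l # ls). W b \<and> Imp d b \<in> \<Lambda> \<Longrightarrow> Imp d (Conj l ls) \<in> \<Lambda>"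
proof (induction ls arbitrary: l)
  case Nil then show ?case by simp
next
  case (Cons b bs)
  then have "Imp d (Conj b bs) \<in> \<Lambda>" by auto
  then show ?case using Cons.prems by (simp add: T_pair wf_Conj)
qed

lemma conj_sub: "set (l # ls) \<subseteq> set (m # ms) \<Longrightarrow> \<forall>b\<in>set (m # ms). W b
   \<Longrightarrow> Imp (Conj m ms) (Conj l ls) \<in> \<Lambda>"
proof (rule conj_intro)
  assume a: "set (l # ls) \<subseteq> set (m # ms)" "\<forall>b\<in>set (m # ms). W b"
  then show "W (Conj m ms)" by (simp add: wf_Conj)
  show "\<forall>b\<in>set (l # ls). W b \<and> Imp (Conj m ms) b \<in> \<Lambda>"
  proof
    fix b assume "b \<in> set (l # ls)"
    then have "b \<in> set (m # ms)" using a by blast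
    then show "W b \<and> Imp (Conj m ms) b \<in> \<Lambda>" using a conj_mem[of b m ms] by auto
  qed
qed

definition top :: "('c, 'f, 'r) fm" where "top = Eq T0 T0"

lemma top_wf: "W top" and top_in: "top \<in> \<Lambda>" and top_fv: "fv top = {Var Agt 0}"
  using T0_wt idax[OF T0_wt] by (auto simp: top_def T0_def)

lemma core:
  assumes "W C" "W \<phi>" "W \<chi>" "y \<notin> fv C" "y \<notin> vars \<phi>" "y \<noteq> x" "vsort y = vsort x"
    and h: "Imp C (Imp (Imp (subst y x \<phi>) (All x \<phi>)) (And \<chi> (Neg \<chi>))) \<in> \<Lambda>"
  shows "Imp C (And \<chi> (Neg \<chi>)) \<in> \<Lambda>"
proof -
  let ?A = "subst y x \<phi>"
  have wA: "W ?A" using assms wf_subst by metis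
  have 1: "Imp C ?A \<in> \<Lambda>" using T1[OF _ _ _ _ h] assms wA by simp
  have 2: "Imp C (All y ?A) \<in> \<Lambda>" using gen[OF 1 assms(4)] .
  have 3: "Imp (All y ?A) \<phi> \<in> \<Lambda>"
    using allax[OF wA, of x y] assms subst_back free_for_back by metis
  have "x \<notin> fv (All y ?A)" using fv_subst assms by simp
  then have 4: "Imp (All y ?A) (All x \<phi>) \<in> \<Lambda>" using gen[OF 3] by blast
  have 5: "Imp C (All x \<phi>) \<in> \<Lambda>" using T_trans[OF _ _ _ 2 4] assms wA by simp
  have 6: "Imp C (Neg (All x \<phi>)) \<in> \<Lambda>" using T2[OF _ _ _ _ h] assms wA by simp
  show ?thesis using T3[OF _ _ _ 5 6] assms by simp
qed

lemma key:
  assumes wD: "\<forall>\<psi>\<in>\<Delta>. W \<psi>" and cD: "consistent cs fs rs \<Lambda> \<Delta>"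
    and fr: "\<forall>\<psi>\<in>\<Delta>. y \<notin> vars \<psi>" and "W \<phi>" "y \<notin> vars \<phi>" "y \<noteq> x" "vsort y = vsort x"
    and y0: "y \<noteq> Var Agt 0"
  shows "consistent cs fs rs \<Lambda> (insert (Imp (subst y x \<phi>) (All x \<phi>)) \<Delta>)"
proof (rule ccontr)
  let ?h = "Imp (subst y x \<phi>) (All x \<phi>)"
  have wh: "W ?h" using assms wf_subst by (metis wf.simps(4) wf.simps(5))
  assume "\<not> ?thesis"
  then obtain \<chi> where w\<chi>: "W \<chi>" and d: "derives \<Lambda> (insert ?h \<Delta>) (And \<chi> (Neg \<chi>))"
    unfolding consistent_def by blast
  let ?b = "And \<chi> (Neg \<chi>)"
  have wb: "W ?b" using w\<chi> by simp
  obtain L where L: "L \<noteq> []" "set L \<subseteq> insert ?h \<Delta>" "Imp (Conj (hd L) (tl L)) ?b \<in> \<Lambda>"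
  proof (cases "?b \<in> \<Lambda>")
    case True
    then have "Imp (Conj ?h []) ?b \<in> \<Lambda>" using T_K wh wb by simp
    then show ?thesis using that[of "[?h]"] by simp
  next
    case False
    then obtain \<psi> \<psi>s where "set (\<psi> # \<psi>s) \<subseteq> insert ?h \<Delta>" "Imp (Conj \<psi> \<psi>s) ?b \<in> \<Lambda>"
      using d unfolding derives_def by blast
    then show ?thesis using that[of "\<psi> # \<psi>s"] by simp
  qed
  define L' where "L' = filter (\<lambda>\<psi>. \<psi> \<noteq> ?h) L"
  have L'D: "set L' \<subseteq> \<Delta>" using L unfolding L'_def by auto
  let ?C = "Conj top L'"
  have wL: "\<forall>b\<in>set L. W b" using L wD wh by auto
  have wL': "\<forall>b\<in>set L'. W b" using L'D wD by auto
  have wC: "W ?C" using wL' top_wf by (simp add: wf_Conj)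
  have yC: "y \<notin> fv ?C" using L'D fr fv_vars y0 top_fv by (fastforce simp: fv_Conj)
  have "Imp (Conj ?h (top # L')) (Conj (hd L) (tl L)) \<in> \<Lambda>"
    by (rule conj_sub) (use L wL wL' wh top_wf in \<open>auto simp: L'_def\<close>)
  then have "Imp (And ?h ?C) (Conj (hd L) (tl L)) \<in> \<Lambda>" by simp
  moreover have "W (Conj (hd L) (tl L))" using wL L(1) by (cases L) (auto simp: wf_Conj)
  ultimately have "Imp (And ?h ?C) ?b \<in> \<Lambda>"
    using T_trans[OF _ _ _ _ L(3)] wh wC wb by simp
  then have "Imp ?C (Imp ?h ?b) \<in> \<Lambda>" using T_exp wh wC wb by blast
  then have cb: "Imp ?C ?b \<in> \<Lambda>" using core[OF wC] assms w\<chi> yC by blast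
  show False
  proof (cases L')
    case Nil
    then have "?b \<in> \<Lambda>" using cb mp top_in by simp
    then show False using cD w\<chi> unfolding consistent_def derives_def by blast
  next
    case (Cons \<psi> \<psi>s)
    then have "Imp (Conj \<psi> \<psi>s) ?b \<in> \<Lambda>"
      using cb T4[OF top_wf _ wb top_in] wL' by (simp add: wf_Conj)
    then show False using cD w\<chi> L'D Cons unfolding consistent_def derives_def by blast
  qed
qed

end

fun idx :: "var \<Rightarrow> nat" where "idx (Var s k) = k"

definition mx :: "('c::countable, 'f::countable, 'r::countable) fm \<Rightarrow> var \<Rightarrow> nat" where
  "mx \<phi> x = Max (idx ` insert x (vars \<phi>))"

definition widx :: "('c::countable, 'f::countable, 'r::countable) fm \<Rightarrow> var \<Rightarrow> nat" where
  "widx \<phi> x = prod_encode (to_nat (\<phi>, x), mx \<phi> x)"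

definition wit :: "('c::countable, 'f::countable, 'r::countable) fm \<Rightarrow> var \<Rightarrow> var" where
  "wit \<phi> x = Var (vsort x) (Suc (2 * widx \<phi> x))"

definition hk :: "('c::countable, 'f::countable, 'r::countable) fm \<Rightarrow> var \<Rightarrow> ('c, 'f, 'r) fm" where
  "hk \<phi> x = Imp (subst (wit \<phi> x) x \<phi>) (All x \<phi>)"

lemma idx_le: "v \<in> insert x (vars \<phi>) \<Longrightarrow> idx v \<le> widx \<phi> x"
proof -
  assume "v \<in> insert x (vars \<phi>)"
  then have "idx v \<le> mx \<phi> x" unfolding mx_def by (intro Max_ge) (auto simp: vars_finite)
  also have "\<dots> \<le> widx \<phi> x" unfolding widx_def by (rule le_prod_encode_2)
  finally show ?thesis .
qed

lemma widx_inj: "widx \<phi> x = widx \<psi> z \<Longrightarrow> \<phi> = \<psi> \<and> x = z"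
  unfolding widx_def using inj_prod_encode[of UNIV] by (auto dest: injD)

lemma hk_inj: "hk \<phi> x = hk \<psi> z \<Longrightarrow> \<phi> = \<psi> \<and> x = z"
  unfolding hk_def by simp

lemma vars_hk: "vars (hk \<phi> x) \<subseteq> insert (wit \<phi> x) (insert x (vars \<phi>))"
  unfolding hk_def using vars_subst[of "wit \<phi> x" x \<phi>] by auto

lemma idx_wit: "idx (wit \<phi> x) = Suc (2 * widx \<phi> x)"
  unfolding wit_def by simp

context NL
begin

lemma wf_hk: "W \<phi> \<Longrightarrow> W (hk \<phi> x)"
proof -
  assume "W \<phi>"
  moreover have "vsort (wit \<phi> x) = vsort x" by (simp add: wit_def)
  ultimately show ?thesis unfolding hk_def using wf_subst[of "wit \<phi> x" x cs fs rs \<phi>] by simp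
qed

lemma henkin_finite:
  assumes LG: "\<forall>\<psi>\<in>\<Gamma>. Lfm cs fs rs \<psi>" and cG: "consistent cs fs rs \<Lambda> \<Gamma>"
  shows "finite S \<Longrightarrow> S \<subseteq> {hk \<phi> x | \<phi> x. W \<phi>} \<Longrightarrow> consistent cs fs rs \<Lambda> (\<Gamma> \<union> S)"
proof (induction "card S" arbitrary: S rule: less_induct)
  case less
  show ?case
  proof (cases "S = {}")
    case True then show ?thesis using cG by simp
  next
    case False
    define P where "P = {(\<phi>, x). W \<phi> \<and> hk \<phi> x \<in> S}"
    have injP: "inj_on (case_prod hk) P" by (auto intro!: inj_onI dest: hk_inj)
    have "case_prod hk ` P \<subseteq> S" unfolding P_def by auto
    then have "finite (case_prod hk ` P)" using less.prems(1) by (rule finite_subset)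
    then have fP: "finite P" by (rule finite_imageD[OF _ injP])
    obtain h where "h \<in> S" using False by blast
    then obtain \<phi>1 x1 where "h = hk \<phi>1 x1" "W \<phi>1" using less.prems(2) by blast
    then have "(\<phi>1, x1) \<in> P" using \<open>h \<in> S\<close> unfolding P_def by simp
    then have neP: "P \<noteq> {}" by blast
    define m where "m = Max (case_prod widx ` P)"
    have "m \<in> case_prod widx ` P" unfolding m_def using fP neP by simp
    then obtain \<phi>0 x0 where p0: "(\<phi>0, x0) \<in> P" and m0: "widx \<phi>0 x0 = m" by auto
    have mle: "widx \<phi> x \<le> m" if "(\<phi>, x) \<in> P" for \<phi> x
      unfolding m_def by (rule Max_ge[OF finite_imageI[OF fP]]) (use that in force)
    let ?h = "hk \<phi>0 x0"
    let ?y = "wit \<phi>0 x0"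
    define S' where "S' = S - {?h}"
    have hS: "?h \<in> S" and w0: "W \<phi>0" using p0 unfolding P_def by auto
    have "card S' < card S" unfolding S'_def using hS less.prems(1) by (meson card_Diff1_less)
    moreover have "S' \<subseteq> {hk \<phi> x | \<phi> x. W \<phi>}" using less.prems unfolding S'_def by auto
    ultimately have cS': "consistent cs fs rs \<Lambda> (\<Gamma> \<union> S')"
      using less.hyps less.prems unfolding S'_def by auto
    have iy: "idx ?y = Suc (2 * m)" using m0 by (simp add: wit_def)
    have fresh0: "v \<in> insert x0 (vars \<phi>0) \<Longrightarrow> v \<noteq> ?y" for v
      using idx_le[of v x0 \<phi>0] m0 iy by auto
    have frG: "\<forall>\<psi>\<in>\<Gamma>. ?y \<notin> vars \<psi>"
    proof (intro ballI notI)
      fix \<psi> assume "\<psi> \<in> \<Gamma>" "?y \<in> vars \<psi>"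
      then have "Lvar ?y" using LG unfolding Lfm_def by blast
      then obtain s k where "?y = Var s (2 * k)" unfolding Lvar_def by blast
      then have "Suc (2 * widx \<phi>0 x0) = 2 * k" unfolding wit_def by simp
      then show False by presburger
    qed
    have frS: "\<forall>\<psi>\<in>S'. ?y \<notin> vars \<psi>"
    proof (intro ballI notI)
      fix \<psi> assume a: "\<psi> \<in> S'" "?y \<in> vars \<psi>"
      then obtain \<phi> x where px: "\<psi> = hk \<phi> x" "W \<phi>" using less.prems unfolding S'_def by auto
      then have inP: "(\<phi>, x) \<in> P" using a unfolding P_def S'_def by auto
      have ne: "(\<phi>, x) \<noteq> (\<phi>0, x0)" using a px unfolding S'_def by auto
      have "widx \<phi> x \<noteq> m"
      proof
        assume "widx \<phi> x = m"
        then have "widx \<phi> x = widx \<phi>0 x0" using m0 by simp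
        then show False using widx_inj ne by blast
      qed
      then have lt: "widx \<phi> x < m" using mle[OF inP] by simp
      have "?y \<in> insert (wit \<phi> x) (insert x (vars \<phi>))" using a px vars_hk by blast
      then show False
      proof
        assume "?y = wit \<phi> x"
        then have "idx ?y = idx (wit \<phi> x)" by simp
        then show False using iy idx_wit[of \<phi> x] lt by simp
      next
        assume "?y \<in> insert x (vars \<phi>)"
        then show False using idx_le[of ?y x \<phi>] iy lt by simp
      qed
    qed
    have wD: "\<forall>\<psi>\<in>\<Gamma> \<union> S'. W \<psi>"
    proof
      fix \<psi> assume "\<psi> \<in> \<Gamma> \<union> S'"
      then show "W \<psi>"
      proof
        assume "\<psi> \<in> \<Gamma>" then show ?thesis using LG unfolding Lfm_def by blast
      next
        assume "\<psi> \<in> S'"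
        then obtain \<phi> x where "\<psi> = hk \<phi> x" "W \<phi>" using less.prems unfolding S'_def by blast
        then show ?thesis using wf_hk by simp
      qed
    qed
    have "consistent cs fs rs \<Lambda> (insert (Imp (subst ?y x0 \<phi>0) (All x0 \<phi>0)) (\<Gamma> \<union> S'))"
    proof (rule key[OF wD cS'])
      show "\<forall>\<psi>\<in>\<Gamma> \<union> S'. ?y \<notin> vars \<psi>" using frG frS by blast
      show "W \<phi>0" by (rule w0)
      show "?y \<notin> vars \<phi>0" using fresh0 by blast
      show "?y \<noteq> x0" using fresh0 by blast
      show "vsort ?y = vsort x0" by (simp add: wit_def)
      show "?y \<noteq> Var Agt 0" by (simp add: wit_def)
    qed
    moreover have "insert (Imp (subst ?y x0 \<phi>0) (All x0 \<phi>0)) (\<Gamma> \<union> S') = \<Gamma> \<union> S"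
      using hS unfolding S'_def hk_def by auto
    ultimately show ?thesis by simp
  qed
qed

end

theorem lemma7p8:
  fixes A :: "'a set"
    and cs :: "'c::countable \<Rightarrow> sort option"
    and fs :: "'f::countable \<Rightarrow> (sort list \<times> sort) option"
    and rs :: "'r::countable \<Rightarrow> sort list option"
    and \<Lambda> \<Gamma> :: "('c, 'f, 'r) fm set"
  assumes "finite A" and "A \<noteq> {}"
    and "\<forall>r as. rs r = Some as \<longrightarrow> as \<noteq> []"
    and "normal_logic (card A) cs fs rs \<Lambda>"
    and "\<forall>\<phi>\<in>\<Gamma>. Lfm cs fs rs \<phi>"
    and "consistent cs fs rs \<Lambda> \<Gamma>"
  shows "\<exists>\<Gamma>p. (\<forall>\<phi>\<in>\<Gamma>p. wf cs fs rs \<phi>) \<and> consistent cs fs rs \<Lambda> \<Gamma>p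
              \<and> forall_property cs fs rs \<Gamma>p \<and> \<Gamma> \<subseteq> \<Gamma>p"
proof -
  interpret NL "card A" cs fs rs \<Lambda> by unfold_locales (rule assms(4))
  define H where "H = {hk \<phi> x | \<phi> x. wf cs fs rs \<phi>}"
  have wG: "\<forall>\<phi>\<in>\<Gamma> \<union> H. wf cs fs rs \<phi>"
    using assms(5) wf_hk unfolding Lfm_def H_def by blast
  have cG: "consistent cs fs rs \<Lambda> (\<Gamma> \<union> H)"
    unfolding consistent_def
  proof (intro allI impI notI)
    fix \<chi> assume w: "wf cs fs rs \<chi>" and d: "derives \<Lambda> (\<Gamma> \<union> H) (And \<chi> (Neg \<chi>))"
    show False
    proof (cases "And \<chi> (Neg \<chi>) \<in> \<Lambda>")
      case True
      then show False using assms(6) w unfolding consistent_def derives_def by blast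
    next
      case False
      then obtain \<psi> \<psi>s where l: "set (\<psi> # \<psi>s) \<subseteq> \<Gamma> \<union> H" "Imp (Conj \<psi> \<psi>s) (And \<chi> (Neg \<chi>)) \<in> \<Lambda>"
        using d unfolding derives_def by blast
      define S where "S = set (\<psi> # \<psi>s) \<inter> H"
      have "consistent cs fs rs \<Lambda> (\<Gamma> \<union> S)"
        by (rule henkin_finite[OF assms(5,6)]) (auto simp: S_def H_def)
      moreover have "set (\<psi> # \<psi>s) \<subseteq> \<Gamma> \<union> S" using l unfolding S_def by blast
      ultimately show False using l(2) w unfolding consistent_def derives_def by blast
    qed
  qed
  have "forall_property cs fs rs (\<Gamma> \<union> H)"
    unfolding forall_property_def
  proof (intro allI impI)
    fix \<phi> x assume "wf cs fs rs \<phi>"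
    then have "hk \<phi> x \<in> \<Gamma> \<union> H" unfolding H_def by blast
    then show "\<exists>y. vsort y = vsort x \<and> Imp (subst y x \<phi>) (All x \<phi>) \<in> \<Gamma> \<union> H"
      unfolding hk_def by (intro exI[of _ "wit \<phi> x"]) (simp add: wit_def)
  qed
  then show ?thesis using wG cG by blast
qed

end
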